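(* Assume $\Delta^2=0$, a constant per-stage budget $\Lambda(t)=\Lambda$, $\pi_0<1$ with $\pi_0\ge(1-\pi_0)/|G|$, and the uniformity hypothesis (U). Define $\bar c(1)=\sigma^2/\sigma_0^2$, $e(\pi_0,G)=\sqrt{|G|\pi_0/(1-\pi_0)}-1$, $c_{\mathrm{crit}}=\Lambda/(|\Psi(1)|\,e(\pi_0,G))$, and recursively $$\bar c(t+1)=\begin{cases}\dfrac{\pi_0^{3/2}+|G|^{-1/2}(1-\pi_0)^{3/2}}{\sqrt{\pi_0}+\sqrt{|G|(1-\pi_0)}}\left((1+|G|)\bar c(t)+\dfrac{\Lambda}{|\Psi(1)|}\right), & \bar c(t)<c_{\mathrm{crit}},\\[2mm] \bar c(t)+\dfrac{\pi_0\Lambda}{|\Psi(1)|}, & \bar c(t)\ge c_{\mathrm{crit}}.\end{cases}$$ Then under the semi-omniscient policy, for all $t\ge1$ and all $i\in H(\Psi(t-1))$, $\mathbb E[c_i(t)\mid |\Psi(1)|]\le\bar c(t)$.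
   Context: Model. There are $Q$ cells. At time $1$ each cell independently contains a target with probability $p_0\in(0,1)$; $\Psi(t)$ is the set of target locations at time $t$, the number of targets $|\Psi(1)|\sim\mathrm{Binomial}(Q,p_0)$ is constant in time, and at most one target occupies a cell. Each cell $j$ has a set $G(j)$ of neighbours with $|G(j)|=|G|$ for all $j$; $H(j)=\{j\}\cup G(j)$, and for a set $S$ of cells $G(S)=\bigcup_{j\in S}G(j)$, $H(S)=S\cup G(S)$; neighbourhoods of distinct targets are disjoint so that $|H(\Psi(t))|=(1+|G|)|\Psi(1)|$. Between stages each target independently stays in its cell with probability $\pi_0$ and otherwise moves to a uniformly chosen neighbour. Amplitudes: initial $\mathcal N(\mu_0,\sigma_0^2)$, random walk with $\mathcal N(0,\Delta^2)$ increments. At stage $t$ efforts $\lambda_i(t)\ge0$, $\sum_i\lambda_i(t)\le\Lambda(t)$, give observations $y_i(t)=\sqrt{\lambda_i(t)}I_i(t)\theta_i(t)+n_i(t)$, $n_i(t)$ i.i.d. $\mathcal N(0,\sigma^2)$. Posterior precisions $c_i(t)$ ($=\sigma^2/$posterior variance) start at $c_i(1)=\sigma^2/\sigma_0^2$ and evolve by: for each target $n$ at $s^{(n)}(t)$ and each $i\in H(s^{(n)}(t))$, $1/c_i(t+1)=1/(c_{s^{(n)}(t)}(t)+\lambda_{s^{(n)}(t)}(t))+\Delta^2/\sigma^2$ (so for $\Delta^2=0$, $c_i(t+1)=c_{s^{(n)}(t)}(t)+\lambda_{s^{(n)}(t)}(t)$). Semi-omniscient policy: at stage $t$ it knows $\Psi(t-1)$,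 so $p_i(t)=\pi_0$ for $i\in\Psi(t-1)$, $p_i(t)=(1-\pi_0)/|G|$ for $i\in G(\Psi(t-1))$, $p_i(t)=0$ otherwise; it allocates $\lambda^s(t)$ minimizing $\sum_i p_i(t)/(c_i(t)+\lambda_i)$ over $\lambda\ge0$ with $\sum_i\lambda_i=\Lambda(t)$. Hypothesis (U): for every $t>1$ the posterior precisions used to compute the allocation are uniform on $H(\Psi(t-1))$ and equal to the bounding sequence, $c_i(t)=\bar c(t)$ for $i\in H(\Psi(t-1))$ (used to determine which cells receive nonzero effort). *)

theory Defs
  imports "HOL-Probability.Probability"
begin

definition nbhd :: "('c \<Rightarrow> 'c set) \<Rightarrow> 'c \<Rightarrow> 'c set" where
  "nbhd G j = insert j (G j)"

definition nbhd_set :: "('c \<Rightarrow> 'c set) \<Rightarrow> 'c set \<Rightarrow> 'c set" where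
  "nbhd_set G S = S \<union> (\<Union>j\<in>S. G j)"

text \<open>Semi-omniscient location probabilities p_i(t), given S = Psi(t-1); g = |G|.\<close>
definition semi_p :: "real \<Rightarrow> nat \<Rightarrow> ('c \<Rightarrow> 'c set) \<Rightarrow> 'c set \<Rightarrow> 'c \<Rightarrow> real" where
  "semi_p pi0 g G S i =
     (if i \<in> S then pi0 else if i \<in> (\<Union>j\<in>S. G j) then (1 - pi0) / real g else 0)"

definition alloc_obj :: "('c::finite \<Rightarrow> real) \<Rightarrow> ('c \<Rightarrow> real) \<Rightarrow> ('c \<Rightarrow> real) \<Rightarrow> real" where
  "alloc_obj p c l = (\<Sum>i\<in>UNIV. p i / (c i + l i))"

definition feasible_alloc :: "real \<Rightarrow> ('c::finite \<Rightarrow> real) \<Rightarrow> bool" where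
  "feasible_alloc Lambda l \<longleftrightarrow> (\<forall>i. 0 \<le> l i) \<and> (\<Sum>i\<in>UNIV. l i) = Lambda"

definition e_fac :: "real \<Rightarrow> nat \<Rightarrow> real" where
  "e_fac pi0 g = sqrt (real g * pi0 / (1 - pi0)) - 1"

definition c_crit :: "real \<Rightarrow> nat \<Rightarrow> real \<Rightarrow> nat \<Rightarrow> real" where
  "c_crit Lambda N pi0 g = Lambda / (real N * e_fac pi0 g)"

definition cbar_step :: "real \<Rightarrow> nat \<Rightarrow> real \<Rightarrow> nat \<Rightarrow> real \<Rightarrow> real" where
  "cbar_step pi0 g Lambda N c =
     (if c < c_crit Lambda N pi0 g then
        (pi0 powr (3/2) + (1 / sqrt (real g)) * (1 - pi0) powr (3/2))
          / (sqrt pi0 + sqrt (real g * (1 - pi0)))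
          * ((1 + real g) * c + Lambda / real N)
      else c + pi0 * Lambda / real N)"

text \<open>Bounding sequence: cbar(1) = c1 (= sigma^2/sigma0^2); index 0 is an unused junk value.\<close>
fun cbar :: "real \<Rightarrow> real \<Rightarrow> nat \<Rightarrow> real \<Rightarrow> nat \<Rightarrow> nat \<Rightarrow> real" where
  "cbar c1 pi0 g Lambda N 0 = c1"
| "cbar c1 pi0 g Lambda N (Suc 0) = c1"
| "cbar c1 pi0 g Lambda N (Suc (Suc t)) = cbar_step pi0 g Lambda N (cbar c1 pi0 g Lambda N (Suc t))"

definition cond_exp_event :: "'w measure \<Rightarrow> 'w set \<Rightarrow> ('w \<Rightarrow> real) \<Rightarrow> real" where
  "cond_exp_event M A X = (\<integral>\<omega>. indicator A \<omega> * X \<omega> \<partial>M) / measure M A"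

end

theory Submission
  imports Defs
begin

lemma term_ge:
  fixes p K x y d mu :: real
  assumes p: "0 < p" and K: "0 < K" and x: "0 \<le> x" and y: "0 \<le> y"
    and d: "p / (K + y)^2 \<le> mu" and d2: "0 < y \<Longrightarrow> p / (K + y)^2 = mu"
  shows "p / (K + x) - p / (K + y) + mu * (x - y) \<ge> p * (x - y)^2 / ((K + x) * (K + y)^2)"
proof -
  have "mu * (x - y) \<ge> p / (K + y)^2 * (x - y)"
  proof (cases "0 < y")
    case True thus ?thesis using d2 by simp
  next
    case False hence "y = 0" using y by simp
    have "p / (K + y)^2 * x \<le> mu * x" using d x by (rule mult_right_mono)
    thus ?thesis using \<open>y = 0\<close> by simp
  qed
  moreover have "p / (K + x) - p / (K + y) + p / (K + y)^2 * (x - y) = p * (x - y)^2 / ((K + x) * (K + y)^2)"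
  proof -
    have h: "K + x \<noteq> 0" "K + y \<noteq> 0" using K x y by auto
    show ?thesis using h by (simp add: divide_simps) (simp add: power2_eq_square algebra_simps)
  qed
  ultimately show ?thesis by linarith
qed

lemma opt_unique:
  fixes p cc xs l :: "'c::finite \<Rightarrow> real" and mu Lambda :: real
  assumes p0: "\<And>i. 0 \<le> p i" and cpos: "\<And>i. 0 < p i \<Longrightarrow> 0 < cc i"
    and xs0: "\<And>i. p i = 0 \<Longrightarrow> xs i = 0" and xsnn: "\<And>i. 0 \<le> xs i"
    and xssum: "sum xs UNIV = Lambda" and mu: "0 \<le> mu"
    and kkt1: "\<And>i. 0 < p i \<Longrightarrow> p i / (cc i + xs i)^2 \<le> mu"
    and kkt2: "\<And>i. 0 < p i \<Longrightarrow> 0 < xs i \<Longrightarrow> p i / (cc i + xs i)^2 = mu"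
    and am: "is_arg_min (alloc_obj p cc) (feasible_alloc Lambda) l"
  shows "\<And>i. 0 < p i \<Longrightarrow> l i = xs i"
proof -
  have fl: "feasible_alloc Lambda l" and nl: "\<not> alloc_obj p cc xs < alloc_obj p cc l"
    using am xsnn xssum unfolding is_arg_min_def feasible_alloc_def by auto
  have lnn: "\<And>i. 0 \<le> l i" and lsum: "sum l UNIV = Lambda" using fl unfolding feasible_alloc_def by auto
  define D where "D i = p i / (cc i + l i) - p i / (cc i + xs i) + mu * (l i - xs i)" for i
  have Dge: "D i \<ge> (if 0 < p i then p i * (l i - xs i)^2 / ((cc i + l i) * (cc i + xs i)^2) else 0)" for i
  proof (cases "0 < p i")
    case True
    show ?thesis using term_ge[OF True cpos[OF True] lnn xsnn kkt1[OF True] kkt2[OF True]] True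
      unfolding D_def by simp
  next
    case False hence "p i = 0" using p0[of i] by simp
    thus ?thesis using xs0[of i] lnn[of i] mu unfolding D_def by simp
  qed
  have Dnn: "0 \<le> D i" for i
  proof -
    have "0 \<le> (if 0 < p i then p i * (l i - xs i)^2 / ((cc i + l i) * (cc i + xs i)^2) else 0)"
      using cpos[of i] lnn[of i] xsnn[of i] by (auto intro!: divide_nonneg_pos mult_nonneg_nonneg)
    thus ?thesis using Dge[of i] by linarith
  qed
  have "sum D UNIV = alloc_obj p cc l - alloc_obj p cc xs + mu * (sum l UNIV - sum xs UNIV)"
    unfolding D_def alloc_obj_def by (simp add: sum.distrib sum_subtractf sum_distrib_left algebra_simps)
  also have "\<dots> \<le> 0" using nl lsum xssum by simp
  finally have "sum D UNIV \<le> 0" .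
  moreover have "0 \<le> sum D UNIV" using Dnn by (simp add: sum_nonneg)
  ultimately have "sum D UNIV = 0" by simp
  hence D0: "D i = 0" for i using Dnn sum_nonneg_eq_0_iff[of UNIV D] by simp
  fix i assume pi: "0 < p i"
  show "l i = xs i"
  proof (rule ccontr)
    assume ne: "l i \<noteq> xs i"
    have "0 < p i * (l i - xs i)^2 / ((cc i + l i) * (cc i + xs i)^2)"
      using pi ne cpos[OF pi] lnn[of i] xsnn[of i] by (intro divide_pos_pos mult_pos_pos) auto
    thus False using Dge[of i] D0[of i] pi by simp
  qed
qed



definition rr :: "real \<Rightarrow> nat \<Rightarrow> real" where "rr pi0 g = sqrt (real g * pi0 / (1 - pi0))"
definition bbf :: "real \<Rightarrow> nat \<Rightarrow> real \<Rightarrow> real \<Rightarrow> real" where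
  "bbf pi0 g L C = (if C * (rr pi0 g - 1) < L then (L + C - rr pi0 g * C) / (rr pi0 g + real g) else 0)"
definition aaf :: "real \<Rightarrow> nat \<Rightarrow> real \<Rightarrow> real \<Rightarrow> real" where
  "aaf pi0 g L C = (if C * (rr pi0 g - 1) < L then rr pi0 g * (C + bbf pi0 g L C) - C else L)"

lemma rr_facts:
  assumes gp: "0 < g" and pi0: "pi0 < 1" "(1-pi0)/real g \<le> pi0"
  shows "0 < pi0" "1 \<le> rr pi0 g" "pi0 = (rr pi0 g)^2 * ((1-pi0)/real g)"
proof -
  have q: "0 < (1-pi0)/real g" using gp pi0 by simp
  thus "0 < pi0" using pi0 by linarith
  have "1 \<le> real g * pi0 / (1 - pi0)" using pi0 gp by (simp add: field_simps)
  thus "1 \<le> rr pi0 g" unfolding rr_def by simp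
  have "0 \<le> real g * pi0 / (1 - pi0)" using \<open>0 < pi0\<close> pi0 by simp
  hence "(rr pi0 g)^2 = real g * pi0 / (1 - pi0)" unfolding rr_def by simp
  thus "pi0 = (rr pi0 g)^2 * ((1-pi0)/real g)" using gp pi0 by (simp add: field_simps)
qed

lemma ab_facts:
  assumes gp: "0 < g" and pi0: "pi0 < 1" "(1-pi0)/real g \<le> pi0" and L: "0 \<le> L" and C: "0 < C"
  shows "0 \<le> aaf pi0 g L C" "0 \<le> bbf pi0 g L C" "aaf pi0 g L C + real g * bbf pi0 g L C = L"
proof -
  note rf = rr_facts[OF gp pi0]
  let ?r = "rr pi0 g"
  show "0 \<le> aaf pi0 g L C" "0 \<le> bbf pi0 g L C" "aaf pi0 g L C + real g * bbf pi0 g L C = L"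
  proof (atomize(full), cases "C * (?r - 1) < L")
    case True
    have b: "bbf pi0 g L C = (L + C - ?r * C) / (?r + real g)" using True unfolding bbf_def by simp
    have bp: "0 < bbf pi0 g L C" unfolding b using True rf gp by (intro divide_pos_pos) (auto simp: algebra_simps)
    have a: "aaf pi0 g L C = ?r * (C + bbf pi0 g L C) - C" using True unfolding aaf_def by simp
    have "C \<le> ?r * (C + bbf pi0 g L C)"
    proof -
      have "C \<le> 1 * (C + bbf pi0 g L C)" using bp by simp
      also have "\<dots> \<le> ?r * (C + bbf pi0 g L C)" using rf bp C by (intro mult_right_mono) auto
      finally show ?thesis .
    qed
    moreover have "?r * (C + bbf pi0 g L C) - C + real g * bbf pi0 g L C = L"
    proof -
      have "?r + real g > 0" using rf gp by simp
      hence "(?r + real g) * bbf pi0 g L C = L + C - ?r * C" unfolding b by simp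
      thus ?thesis by (simp add: algebra_simps)
    qed
    ultimately show "0 \<le> aaf pi0 g L C \<and> 0 \<le> bbf pi0 g L C \<and> aaf pi0 g L C + real g * bbf pi0 g L C = L"
      using a bp by simp
  next
    case False thus "0 \<le> aaf pi0 g L C \<and> 0 \<le> bbf pi0 g L C \<and> aaf pi0 g L C + real g * bbf pi0 g L C = L"
      using L unfolding aaf_def bbf_def by simp
  qed
qed

lemma opt_struct:
  fixes G :: "'c::finite \<Rightarrow> 'c set" and S :: "'c set" and cc l :: "'c \<Rightarrow> real"
  assumes Gc: "\<And>j. card (G j) = g" and gp: "0 < g" and Gi: "\<And>j. j \<notin> G j"
    and dj: "\<And>j j'. j \<in> S \<Longrightarrow> j' \<in> S \<Longrightarrow> j \<noteq> j' \<Longrightarrow> nbhd G j \<inter> nbhd G j' = {}"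
    and pi0: "pi0 < 1" "(1-pi0)/real g \<le> pi0" and La: "0 \<le> Lambda" and Sne: "S \<noteq> {}"
    and C: "0 < C"
    and cc: "\<And>i. i \<in> nbhd_set G S \<Longrightarrow> cc i = C"
    and am: "is_arg_min (alloc_obj (semi_p pi0 g G S) cc) (feasible_alloc Lambda) l"
  shows "(\<forall>j\<in>S. l j = aaf pi0 g (Lambda / card S) C) \<and>
         (\<forall>j\<in>(\<Union>j\<in>S. G j). l j = bbf pi0 g (Lambda / card S) C)"
proof -
  note rf = rr_facts[OF gp pi0]
  define r where "r = rr pi0 g"
  define q where "q = (1 - pi0) / real g"
  define L where "L = Lambda / card S"
  define a where "a = aaf pi0 g L C"
  define b where "b = bbf pi0 g L C"
  define U where "U = (\<Union>j\<in>S. G j)"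
  have q: "0 < q" using gp pi0 unfolding q_def by simp
  have r1: "1 \<le> r" and pq: "pi0 = r^2 * q" using rf unfolding r_def q_def by auto
  have N: "0 < card S" using Sne by (simp add: card_gt_0_iff)
  have L0: "0 \<le> L" using La N unfolding L_def by simp
  note abf = ab_facts[OF gp pi0 L0 C]
  have a0: "0 \<le> a" and b0: "0 \<le> b" and abL: "a + real g * b = L" using abf unfolding a_def b_def by auto
  have SU: "S \<inter> U = {}"
  proof -
    { fix x assume x: "x \<in> S" "x \<in> U"
      then obtain j where j: "j \<in> S" "x \<in> G j" unfolding U_def by auto
      have "x \<noteq> j" using j Gi by auto
      hence "nbhd G x \<inter> nbhd G j = {}" using dj x j by auto
      moreover have "x \<in> nbhd G x \<inter> nbhd G j" using j unfolding nbhd_def by auto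
      ultimately have False by auto }
    thus ?thesis by auto
  qed
  have cardU: "card U = card S * g"
  proof -
    have "card U = (\<Sum>j\<in>S. card (G j))" unfolding U_def
    proof (rule card_UN_disjoint)
      show "\<forall>i\<in>S. \<forall>j\<in>S. i \<noteq> j \<longrightarrow> G i \<inter> G j = {}"
        using dj unfolding nbhd_def by blast
    qed auto
    thus ?thesis using Gc by simp
  qed
  define xs where "xs i = (if i \<in> S then a else if i \<in> U then b else 0)" for i
  have p_eq: "semi_p pi0 g G S i = (if i \<in> S then pi0 else if i \<in> U then q else 0)" for i
    unfolding semi_p_def U_def q_def by simp
  have HS: "nbhd_set G S = S \<union> U" unfolding nbhd_set_def U_def by simp
  have xsum: "sum xs UNIV = Lambda"
  proof -
    have UNIV_eq: "(UNIV :: 'c set) = (S \<union> U) \<union> (- (S \<union> U))" by auto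
    have "sum xs UNIV = sum xs (S \<union> U) + sum xs (- (S \<union> U))"
      by (subst UNIV_eq, rule sum.union_disjoint) auto
    also have "sum xs (- (S \<union> U)) = 0" unfolding xs_def by (intro sum.neutral) auto
    also have "sum xs (S \<union> U) = sum xs S + sum xs U" using SU by (intro sum.union_disjoint) auto
    also have "sum xs S = card S * a" unfolding xs_def by simp
    also have "sum xs U = card U * b" unfolding xs_def using SU by (subst sum.cong[where B=U and h="\<lambda>_. b"]) auto
    finally have "sum xs UNIV = card S * (a + real g * b)" unfolding cardU by (simp add: algebra_simps)
    thus ?thesis unfolding abL L_def using N Sne by simp
  qed
  define mu where "mu = (if C * (r - 1) < L then q / (C + b)^2 else pi0 / (C + L)^2)"
  have kk: "pi0 / (C + a)^2 = mu \<and> q / (C + b)^2 \<le> mu \<and> (0 < b \<longrightarrow> q / (C + b)^2 = mu)"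
  proof (cases "C * (r - 1) < L")
    case True
    have aeq: "C + a = r * (C + b)" unfolding a_def b_def aaf_def using True r_def by simp
    have "pi0 / (C + a)^2 = q / (C + b)^2"
      unfolding aeq pq using r1 by (simp add: power_mult_distrib)
    thus ?thesis using True unfolding mu_def by simp
  next
    case False
    have ab': "a = L" "b = 0" using False unfolding a_def b_def aaf_def bbf_def r_def by auto
    have "C + L \<le> r * C" using False by (simp add: algebra_simps)
    hence "(C + L)^2 \<le> (r * C)^2" using C L0 by (intro power_mono) auto
    hence "q * (C + L)^2 \<le> pi0 * C^2" unfolding pq using q by (simp add: power_mult_distrib algebra_simps)
    hence "q / C^2 \<le> pi0 / (C + L)^2" using C L0 by (simp add: divide_simps)
    thus ?thesis using False ab' unfolding mu_def by simp
  qed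
  have mu0: "0 \<le> mu" unfolding mu_def using q rf by simp
  have res: "\<And>i. 0 < semi_p pi0 g G S i \<Longrightarrow> l i = xs i"
  proof (rule opt_unique[OF _ _ _ _ xsum mu0 _ _ am])
    fix i
    show "0 \<le> semi_p pi0 g G S i" unfolding p_eq using q rf by simp
    show "0 < semi_p pi0 g G S i \<Longrightarrow> 0 < cc i" using cc[of i] C unfolding p_eq HS
      by (auto split: if_splits)
    show "semi_p pi0 g G S i = 0 \<Longrightarrow> xs i = 0" unfolding p_eq xs_def using q rf by (auto split: if_splits)
    show "0 \<le> xs i" unfolding xs_def using a0 b0 by simp
    show "0 < semi_p pi0 g G S i \<Longrightarrow> semi_p pi0 g G S i / (cc i + xs i)^2 \<le> mu"
      using kk cc[of i] unfolding p_eq HS xs_def by (auto split: if_splits)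
    show "0 < semi_p pi0 g G S i \<Longrightarrow> 0 < xs i \<Longrightarrow> semi_p pi0 g G S i / (cc i + xs i)^2 = mu"
      using kk cc[of i] unfolding p_eq HS xs_def by (auto split: if_splits)
  qed
  show ?thesis
  proof safe
    fix j assume "j \<in> S"
    thus "l j = aaf pi0 g (Lambda / card S) C" using res[of j] rf unfolding p_eq xs_def a_def L_def by simp
  next
    fix j x assume "x \<in> S" "j \<in> G x"
    hence "j \<in> U" "j \<notin> S" using SU unfolding U_def by auto
    thus "l j = bbf pi0 g (Lambda / card S) C" using res[of j] q unfolding p_eq xs_def b_def L_def by simp
  qed
qed



lemma factor_alg:
  fixes P Q s :: real
  assumes "0 < P" "0 < Q" "0 < s"
  shows "(P^2 * (s * P / Q) + Q^2) / (s * P / Q + s^2) = (P^3 + 1 / s * Q^3) / (P + s * Q)"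
proof -
  have a: "P^2 * (s * P / Q) + Q^2 = (s * P^3 + Q^3) / Q" using assms by (simp add: field_simps power2_eq_square power3_eq_cube)
  have b: "s * P / Q + s^2 = s * (P + s * Q) / Q" using assms by (simp add: field_simps power2_eq_square)
  have c: "P^3 + 1 / s * Q^3 = (s * P^3 + Q^3) / s" using assms by (simp add: field_simps)
  have d: "0 < P + s * Q" using assms by (intro add_pos_pos mult_pos_pos)
  show ?thesis unfolding a b c using assms d by (simp add: divide_simps)
qed

lemma step_val:
  assumes gp: "0 < g" and pi0: "pi0 < 1" "(1-pi0)/real g \<le> pi0" and La: "0 \<le> Lambda"
    and N: "0 < N" and C: "0 < C"
  shows "C + pi0 * aaf pi0 g (Lambda / N) C + (1 - pi0) * bbf pi0 g (Lambda / N) C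
         = cbar_step pi0 g Lambda N C"
proof -
  note rf = rr_facts[OF gp pi0]
  define r where "r = rr pi0 g"
  define L where "L = Lambda / N"
  have r1: "1 \<le> r" and pq: "pi0 = r^2 * ((1 - pi0) / real g)" using rf unfolding r_def by auto
  have p0: "0 < pi0" using rf by simp
  have L0: "0 \<le> L" using La N unfolding L_def by simp
  have e: "e_fac pi0 g = r - 1" unfolding e_fac_def r_def rr_def by simp
  have cc: "c_crit Lambda N pi0 g = Lambda / (real N * (r - 1))" unfolding c_crit_def e ..
  show ?thesis
  proof (cases "r = 1")
    case True
    have pg: "pi0 * (1 + real g) = 1" using pq True gp by (simp add: field_simps)
    have rhs: "cbar_step pi0 g Lambda N C = C + pi0 * L"
      unfolding cbar_step_def cc True L_def using C by simp
    show ?thesis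
    proof (cases "0 < L")
      case True2: True
      have b: "bbf pi0 g L C = L / (1 + real g)" unfolding bbf_def using True True2 r_def by simp
      have a: "aaf pi0 g L C = L / (1 + real g)" unfolding aaf_def b using True True2 r_def by simp
      have "pi0 * L = L / (1 + real g)" using pg gp by (simp add: field_simps)
      moreover have "\<And>x::real. pi0 * x + (1 - pi0) * x = x" by (simp add: algebra_simps)
      ultimately show ?thesis unfolding rhs L_def[symmetric] a b by (metis add.assoc)
    next
      case False
      hence "L = 0" using L0 by simp
      thus ?thesis unfolding rhs L_def[symmetric] aaf_def bbf_def using True r_def by simp
    qed
  next
    case False
    hence rg: "1 < r" using r1 by simp
    have crit: "C < c_crit Lambda N pi0 g \<longleftrightarrow> C * (r - 1) < L"
      unfolding cc L_def using rg N by (simp add: field_simps)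
    show ?thesis
    proof (cases "C * (r - 1) < L")
      case True
      define b where "b = bbf pi0 g L C"
      have bdef: "b = (L + C - r * C) / (r + real g)" unfolding b_def bbf_def using True r_def by simp
      have a: "aaf pi0 g L C = r * (C + b) - C" unfolding aaf_def b_def using True r_def by simp
      have rgp: "0 < r + real g" using rg by simp
      have Cb: "C + b = ((1 + real g) * C + L) / (r + real g)"
        unfolding bdef using rgp by (simp add: field_simps)
      have lhs: "C + pi0 * aaf pi0 g L C + (1 - pi0) * b = (C + b) * (pi0 * r + 1 - pi0)"
        unfolding a by (simp add: algebra_simps)
      define P where "P = sqrt pi0"
      define Q where "Q = sqrt (1 - pi0)"
      define s where "s = sqrt (real g)"
      have PQs: "0 < P" "0 < Q" "0 < s" unfolding P_def Q_def s_def using p0 pi0 gp by auto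
      have pP: "pi0 = P^2" unfolding P_def using p0 by simp
      have qQ: "1 - pi0 = Q^2" unfolding Q_def using pi0 by simp
      have gs: "real g = s^2" unfolding s_def by simp
      have rP: "r = s * P / Q" unfolding r_def rr_def P_def Q_def s_def
        by (simp add: real_sqrt_mult real_sqrt_divide)
      have pw1: "pi0 powr (3/2) = P^3"
      proof -
        have "pi0 powr (3/2) = pi0 powr 1 * pi0 powr (1/2)" using powr_add[of "pi0" 1 "1/2"] by simp
        also have "\<dots> = pi0 * pi0 powr (1/2)" using p0 by simp
        also have "\<dots> = P^3" unfolding P_def using p0 by (simp add: powr_half_sqrt power3_eq_cube)
        finally show ?thesis .
      qed
      have pw2: "(1 - pi0) powr (3/2) = Q^3"
      proof -
        have "(1 - pi0) powr (3/2) = (1 - pi0) powr 1 * (1 - pi0) powr (1/2)" using powr_add[of "(1 - pi0)" 1 "1/2"] by simp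
        also have "\<dots> = (1 - pi0) * (1 - pi0) powr (1/2)" using pi0 by simp
        also have "\<dots> = Q^3" unfolding Q_def using pi0 by (simp add: powr_half_sqrt power3_eq_cube)
        finally show ?thesis .
      qed
      have sq2: "sqrt (real g * (1 - pi0)) = s * Q" unfolding s_def Q_def by (simp add: real_sqrt_mult)
      have F: "(pi0 * r + 1 - pi0) / (r + real g) =
            (pi0 powr (3/2) + (1 / sqrt (real g)) * (1 - pi0) powr (3/2)) / (sqrt pi0 + sqrt (real g * (1 - pi0)))"
      proof -
        have "(pi0 * r + 1 - pi0) / (r + real g) = (P^2 * (s * P / Q) + Q^2) / (s * P / Q + s^2)"
          using pP qQ rP gs by (simp add: algebra_simps)
        also have "\<dots> = (P^3 + 1 / s * Q^3) / (P + s * Q)" by (rule factor_alg[OF PQs])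
        finally show ?thesis unfolding pw1 pw2 sq2 P_def[symmetric] s_def[symmetric] .
      qed
      have "cbar_step pi0 g Lambda N C =
            (pi0 * r + 1 - pi0) / (r + real g) * ((1 + real g) * C + L)"
        unfolding cbar_step_def F using crit True L_def by simp
      also have "\<dots> = (C + b) * (pi0 * r + 1 - pi0)" unfolding Cb by simp
      finally show ?thesis using lhs unfolding L_def b_def by simp
    next
      case False
      have rhs: "cbar_step pi0 g Lambda N C = C + pi0 * L"
        unfolding cbar_step_def using crit False L_def by simp
      show ?thesis unfolding rhs L_def[symmetric] aaf_def bbf_def using False r_def by simp
    qed
  qed
qed



lemma meas_sum:
  assumes "finite_measure M" "finite F" "\<And>x. x \<in> F \<Longrightarrow> {\<omega>\<in>space M. X \<omega> = x} \<in> sets M"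
  shows "measure M {\<omega>\<in>space M. X \<omega> \<in> F} = (\<Sum>x\<in>F. measure M {\<omega>\<in>space M. X \<omega> = x})"
proof -
  interpret finite_measure M by fact
  have "{\<omega>\<in>space M. X \<omega> \<in> F} = (\<Union>x\<in>F. {\<omega>\<in>space M. X \<omega> = x})" by auto
  also have "measure M \<dots> = (\<Sum>x\<in>F. measure M {\<omega>\<in>space M. X \<omega> = x})"
    using assms by (intro finite_measure_finite_Union) (auto simp: disjoint_family_on_def)
  finally show ?thesis .
qed

lemma cs_comp: "X \<in> measurable M (count_space UNIV) \<Longrightarrow> (\<lambda>\<omega>. \<phi> (X \<omega>)) \<in> measurable M (count_space UNIV)"
  by (rule measurable_compose[OF _ measurable_count_space])

lemma cs_pair:
  fixes X :: "'w \<Rightarrow> 'a::countable" and Y :: "'w \<Rightarrow> 'b::countable"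
  assumes "X \<in> measurable M (count_space UNIV)" "Y \<in> measurable M (count_space UNIV)"
  shows "(\<lambda>\<omega>. \<phi> (X \<omega>) (Y \<omega>)) \<in> measurable M (count_space UNIV)"
proof -
  have "(\<lambda>\<omega>. (X \<omega>, Y \<omega>)) \<in> measurable M (count_space UNIV \<Otimes>\<^sub>M count_space UNIV)"
    using assms by (rule measurable_Pair)
  also have "count_space UNIV \<Otimes>\<^sub>M count_space UNIV = count_space (UNIV :: ('a \<times> 'b) set)"
    by (simp add: pair_measure_countable)
  finally have "(\<lambda>\<omega>. (X \<omega>, Y \<omega>)) \<in> measurable M (count_space UNIV)" .
  from cs_comp[OF this, of "\<lambda>(a, b). \<phi> a b"] show ?thesis by simp
qed

lemma cs_map:
  fixes f :: "'i \<Rightarrow> 'w \<Rightarrow> 'a::countable"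
  assumes "\<And>x. f x \<in> measurable M (count_space UNIV)"
  shows "(\<lambda>\<omega>. map (\<lambda>x. f x \<omega>) xs) \<in> measurable M (count_space UNIV)"
proof (induction xs)
  case Nil thus ?case by simp
next
  case (Cons x xs)
  from cs_pair[OF assms[of x] Cons, of "(#)"] show ?case by simp
qed

lemma cs_set:
  assumes "X \<in> measurable M (count_space UNIV)" shows "{\<omega>\<in>space M. P (X \<omega>)} \<in> sets M"
proof -
  have "(\<lambda>\<omega>. P (X \<omega>)) -` {True} \<inter> space M \<in> sets M"
    by (rule measurable_sets[OF cs_comp[OF assms]]) simp
  moreover have "(\<lambda>\<omega>. P (X \<omega>)) -` {True} \<inter> space M = {\<omega>\<in>space M. P (X \<omega>)}" by auto
  ultimately show ?thesis by simp
qed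

locale model =
  fixes M :: "'w measure"
    and G :: "'c::finite \<Rightarrow> 'c set" and g :: nat
    and pi0 sigma sigma0 Delta Lambda :: real
    and Ntg :: "'w \<Rightarrow> nat"
    and s :: "nat \<Rightarrow> nat \<Rightarrow> 'w \<Rightarrow> 'c"
    and mv :: "nat \<Rightarrow> 'w \<Rightarrow> 'c \<Rightarrow> 'c"
    and c lam :: "nat \<Rightarrow> 'c \<Rightarrow> 'w \<Rightarrow> real"
    and Psi :: "nat \<Rightarrow> 'w \<Rightarrow> 'c set"
  assumes M: "prob_space M"
    and G_card: "\<And>j. card (G j) = g" and g_pos: "0 < g" and G_irrefl: "\<And>j. j \<notin> G j"
    and sig: "0 < sigma" "0 < sigma0"
    and Delta0: "Delta\<^sup>2 = 0"
    and Lambda: "0 \<le> Lambda"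
    and pi0: "pi0 < 1" "pi0 \<ge> (1 - pi0) / real g"
    and Psi_def: "\<And>t \<omega>. Psi t \<omega> = (\<lambda>n. s t n \<omega>) ` {..<Ntg \<omega>}"
    and disj: "\<And>t \<omega> n n'. n < Ntg \<omega> \<Longrightarrow> n' < Ntg \<omega> \<Longrightarrow> n \<noteq> n' \<Longrightarrow>
                 nbhd G (s t n \<omega>) \<inter> nbhd G (s t n' \<omega>) = {}"
    and move: "\<And>t n \<omega>. s (Suc t) n \<omega> = mv t \<omega> (s t n \<omega>)"
    and meas_N: "Ntg \<in> measurable M (count_space UNIV)"
    and meas_s: "\<And>t n. s t n \<in> measurable M (count_space UNIV)"
    and meas_mv: "\<And>t. mv t \<in> measurable M (count_space UNIV)"
    and meas_c: "\<And>t i. c t i \<in> borel_measurable M"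
    and meas_lam: "\<And>t i. lam t i \<in> borel_measurable M"
    and move_stay: "\<And>t j. measure M {\<omega> \<in> space M. mv t \<omega> j = j} = pi0"
    and move_nb: "\<And>t j k. k \<in> G j \<Longrightarrow> measure M {\<omega> \<in> space M. mv t \<omega> j = k} = (1 - pi0) / real g"
    and move_indep_cells: "\<And>t. prob_space.indep_vars M (\<lambda>_. count_space UNIV) (\<lambda>j \<omega>. mv t \<omega> j) UNIV"
    and move_indep_past: "\<And>t f h. measure M {\<omega> \<in> space M. mv t \<omega> = f \<and>
              (Ntg \<omega>, map (\<lambda>k. map (\<lambda>n. s k n \<omega>) [0..<Ntg \<omega>]) [0..<Suc t]) = h}
          = measure M {\<omega> \<in> space M. mv t \<omega> = f}
            * measure M {\<omega> \<in> space M.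
                (Ntg \<omega>, map (\<lambda>k. map (\<lambda>n. s k n \<omega>) [0..<Ntg \<omega>]) [0..<Suc t]) = h}"
    and c_init: "\<And>i \<omega>. c 1 i \<omega> = sigma\<^sup>2 / sigma0\<^sup>2"
    and c_update: "\<And>t n \<omega> i. 1 \<le> t \<Longrightarrow> n < Ntg \<omega> \<Longrightarrow> i \<in> nbhd G (s t n \<omega>) \<Longrightarrow>
            1 / c (Suc t) i \<omega> = 1 / (c t (s t n \<omega>) \<omega> + lam t (s t n \<omega>) \<omega>) + Delta\<^sup>2 / sigma\<^sup>2"
    and policy_U: "\<And>t \<omega>. 1 \<le> t \<Longrightarrow>
            is_arg_min
              (alloc_obj (semi_p pi0 g G (Psi (t - 1) \<omega>))
                 (\<lambda>i. if i \<in> nbhd_set G (Psi (t - 1) \<omega>)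
                      then cbar (sigma\<^sup>2 / sigma0\<^sup>2) pi0 g Lambda (card (Psi 1 \<omega>)) t
                      else c t i \<omega>))
              (feasible_alloc Lambda) (\<lambda>i. lam t i \<omega>)"




context model begin

interpretation P: prob_space M by (rule M)

abbreviation "c1 \<equiv> sigma\<^sup>2 / sigma0\<^sup>2"
abbreviation "cb k t \<equiv> cbar c1 pi0 g Lambda k t"
definition "dl k u = pi0 * aaf pi0 g (Lambda / real k) (cb k u) + (1 - pi0) * bbf pi0 g (Lambda / real k) (cb k u)"

lemma c1_pos: "0 < c1" using sig by simp

lemma pi0_pos: "0 < pi0" using rr_facts[OF g_pos pi0] by simp

lemma inj_s: "inj_on (\<lambda>n. s t n \<omega>) {..<Ntg \<omega>}"
proof (rule inj_onI)
  fix n n' assume "n \<in> {..<Ntg \<omega>}" "n' \<in> {..<Ntg \<omega>}" "s t n \<omega> = s t n' \<omega>"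
  thus "n = n'" using disj[of n \<omega> n' t] unfolding nbhd_def by auto
qed

lemma card_Psi: "card (Psi t \<omega>) = Ntg \<omega>"
  unfolding Psi_def using inj_s by (simp add: card_image)

lemma A_eq: "{\<omega>\<in>space M. card (Psi 1 \<omega>) = k} = {\<omega>\<in>space M. Ntg \<omega> = k}"
  using card_Psi by simp

lemma lam_feas: "1 \<le> u \<Longrightarrow> 0 \<le> lam u j \<omega> \<and> lam u j \<omega> \<le> Lambda"
proof -
  assume u: "1 \<le> u"
  have f: "feasible_alloc Lambda (\<lambda>i. lam u i \<omega>)" using policy_U[OF u, of \<omega>] unfolding is_arg_min_def by simp
  hence nn: "\<And>i. 0 \<le> lam u i \<omega>" and sm: "(\<Sum>i\<in>UNIV. lam u i \<omega>) = Lambda" unfolding feasible_alloc_def by auto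
  have "lam u j \<omega> \<le> (\<Sum>i\<in>UNIV. lam u i \<omega>)" using nn by (intro member_le_sum) auto
  thus ?thesis using nn sm by simp
qed

lemma cb_ge: "0 < k \<Longrightarrow> c1 \<le> cb k t"
proof -
  assume k: "0 < k"
  have "c1 \<le> cb k (Suc t)" for t
  proof (induction t)
    case 0 thus ?case by simp
  next
    case (Suc t)
    have C: "0 < cb k (Suc t)" using Suc c1_pos by linarith
    have L0: "0 \<le> Lambda / real k" using Lambda k by simp
    note ab = ab_facts[OF g_pos pi0 L0 C]
    have "cb k (Suc (Suc t)) = cb k (Suc t) + pi0 * aaf pi0 g (Lambda / real k) (cb k (Suc t))
            + (1 - pi0) * bbf pi0 g (Lambda / real k) (cb k (Suc t))"
      using step_val[OF g_pos pi0 Lambda k C] by simp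
    moreover have "0 \<le> pi0 * aaf pi0 g (Lambda / real k) (cb k (Suc t))" using ab pi0_pos by simp
    moreover have "0 \<le> (1 - pi0) * bbf pi0 g (Lambda / real k) (cb k (Suc t))" using ab pi0 by simp
    ultimately show ?case using Suc by linarith
  qed
  thus ?thesis by (cases t) auto
qed

lemma cb_step: "0 < k \<Longrightarrow> 1 \<le> u \<Longrightarrow> cb k (Suc u) = cb k u + dl k u"
proof -
  assume k: "0 < k" and u: "1 \<le> u"
  then obtain u' where u': "u = Suc u'" by (cases u) auto
  have C: "0 < cb k u" using cb_ge[OF k, of u] c1_pos by linarith
  show ?thesis using step_val[OF g_pos pi0 Lambda k C] unfolding u' dl_def by simp
qed

lemma mv_nbhd_prob: "measure M {\<omega>\<in>space M. mv u \<omega> j \<in> nbhd G j} = 1"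
proof -
  have "measure M {\<omega>\<in>space M. mv u \<omega> j \<in> nbhd G j} = (\<Sum>x\<in>nbhd G j. measure M {\<omega>\<in>space M. mv u \<omega> j = x})"
    by (rule meas_sum) (auto intro: P.finite_measure_axioms cs_set[OF meas_mv])
  also have "\<dots> = pi0 + (\<Sum>x\<in>G j. (1 - pi0) / real g)"
    unfolding nbhd_def using G_irrefl[of j] move_stay move_nb by (simp add: sum.insert)
  also have "\<dots> = 1" using G_card[of j] g_pos by simp
  finally show ?thesis .
qed

lemma AE_good: "AE \<omega> in M. \<forall>u j. mv u \<omega> j \<in> nbhd G j"
proof -
  have "AE \<omega> in M. mv u \<omega> j \<in> nbhd G j" for u j
    using P.AE_prob_1[OF mv_nbhd_prob[of u j]] by (rule AE_mp) auto
  thus ?thesis by (simp add: AE_all_countable)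
qed

end



context model begin

interpretation P: prob_space M by (rule M)

lemma lam_struct:
  assumes u: "1 \<le> u" and k: "Ntg \<omega> = k" "0 < k"
  shows "(\<forall>j\<in>Psi (u-1) \<omega>. lam u j \<omega> = aaf pi0 g (Lambda / real k) (cb k u)) \<and>
         (\<forall>j\<in>(\<Union>j\<in>Psi (u-1) \<omega>. G j). lam u j \<omega> = bbf pi0 g (Lambda / real k) (cb k u))"
proof -
  have c1k: "card (Psi 1 \<omega>) = k" "card (Psi (u-1) \<omega>) = k" using card_Psi k by auto
  have am: "is_arg_min (alloc_obj (semi_p pi0 g G (Psi (u - 1) \<omega>))
                 (\<lambda>i. if i \<in> nbhd_set G (Psi (u - 1) \<omega>) then cb k u else c u i \<omega>))
              (feasible_alloc Lambda) (\<lambda>i. lam u i \<omega>)"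
    using policy_U[OF u, of \<omega>] unfolding c1k by simp
  have C: "0 < cb k u" using cb_ge[OF k(2), of u] c1_pos by linarith
  have Sne: "Psi (u-1) \<omega> \<noteq> {}" using c1k k by auto
  have dj: "nbhd G j \<inter> nbhd G j' = {}" if a: "j \<in> Psi (u-1) \<omega>" "j' \<in> Psi (u-1) \<omega>" "j \<noteq> j'" for j j'
  proof -
    obtain m m' where "m < Ntg \<omega>" "m' < Ntg \<omega>" "j = s (u-1) m \<omega>" "j' = s (u-1) m' \<omega>"
      using a(1,2) unfolding Psi_def by auto
    thus ?thesis using disj[of m \<omega> m' "u-1"] a(3) by auto
  qed
  from opt_struct[OF G_card g_pos G_irrefl dj pi0 Lambda Sne C _ am]
  show ?thesis unfolding c1k by simp
qed

lemma c_path: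
  assumes k: "Ntg \<omega> = k" and n: "n < k" and good: "\<forall>u j. mv u \<omega> j \<in> nbhd G j"
  shows "i \<in> nbhd G (s t n \<omega>) \<Longrightarrow> c (Suc t) i \<omega> = c1 + (\<Sum>u\<in>{1..<Suc t}. lam u (s u n \<omega>) \<omega>)"
proof (induction t arbitrary: i)
  case 0 thus ?case using c_init by simp
next
  case (Suc t)
  have sn: "s (Suc t) n \<omega> \<in> nbhd G (s t n \<omega>)" using good move by simp
  note IH = Suc.IH[OF sn]
  define X where "X = c (Suc t) (s (Suc t) n \<omega>) \<omega> + lam (Suc t) (s (Suc t) n \<omega>) \<omega>"
  have s0: "0 \<le> (\<Sum>u\<in>{1..<Suc t}. lam u (s u n \<omega>) \<omega>)" using lam_feas by (intro sum_nonneg) auto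
  have "0 \<le> lam (Suc t) (s (Suc t) n \<omega>) \<omega>" using lam_feas by simp
  hence Xp: "0 < X" unfolding X_def IH using s0 c1_pos by linarith
  have "1 / c (Suc (Suc t)) i \<omega> = 1 / X"
    using c_update[of "Suc t" n \<omega> i] Suc.prems k n Delta0 unfolding X_def by simp
  hence "inverse (c (Suc (Suc t)) i \<omega>) = inverse X" by (simp add: inverse_eq_divide)
  hence "c (Suc (Suc t)) i \<omega> = X" by simp
  thus ?case unfolding X_def IH by simp
qed

definition "Hh T \<omega> = (Ntg \<omega>, map (\<lambda>k'. map (\<lambda>n. s k' n \<omega>) [0..<Ntg \<omega>]) [0..<Suc T])"

lemma Hh_meas: "Hh T \<in> measurable M (count_space UNIV)"
proof -
  have "(\<lambda>\<omega>. (m, map (\<lambda>k'. map (\<lambda>n. s k' n \<omega>) [0..<m]) [0..<Suc T])) \<in> measurable M (count_space UNIV)" for m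
  proof -
    have "(\<lambda>\<omega>. map (\<lambda>n. s k' n \<omega>) [0..<m]) \<in> measurable M (count_space UNIV)" for k'
      by (rule cs_map[OF meas_s])
    hence "(\<lambda>\<omega>. map (\<lambda>k'. map (\<lambda>n. s k' n \<omega>) [0..<m]) [0..<Suc T]) \<in> measurable M (count_space UNIV)"
      by (rule cs_map)
    thus ?thesis by (rule cs_comp)
  qed
  from measurable_compose_countable[OF this meas_N]
  show ?thesis unfolding Hh_def[abs_def] .
qed

lemma indep:
  assumes n: "n < k"
  shows "measure M {\<omega>\<in>space M. Ntg \<omega> = k \<and> mv T \<omega> (s T n \<omega>) = s T n \<omega>}
         = pi0 * measure M {\<omega>\<in>space M. Ntg \<omega> = k}"
proof -
  define Vk where "Vk = Pair k ` {xs. set xs \<subseteq> {ys :: 'c list. set ys \<subseteq> UNIV \<and> length ys = k} \<and> length xs = Suc T}"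
  define xh where "xh h = snd h ! T ! n" for h :: "nat \<times> 'c list list"
  define W where "W = (SIGMA h:Vk. {f :: 'c \<Rightarrow> 'c. f (xh h) = xh h})"
  have finVk: "finite Vk" unfolding Vk_def
    by (intro finite_imageI finite_lists_length_eq finite_lists_length_eq) auto
  have finW: "finite W" unfolding W_def using finVk by (intro finite_SigmaI) auto
  have Zmeas: "(\<lambda>\<omega>. (Hh T \<omega>, mv T \<omega>)) \<in> measurable M (count_space UNIV)"
    by (rule cs_pair[OF Hh_meas meas_mv])
  have HinV: "Hh T \<omega> \<in> Vk \<longleftrightarrow> Ntg \<omega> = k" for \<omega>
    unfolding Hh_def Vk_def by (auto simp: image_iff)
  have xhH: "Ntg \<omega> = k \<Longrightarrow> xh (Hh T \<omega>) = s T n \<omega>" for \<omega>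
    unfolding Hh_def xh_def using n by (simp del: upt_Suc)
  have "{\<omega>\<in>space M. Ntg \<omega> = k \<and> mv T \<omega> (s T n \<omega>) = s T n \<omega>} = {\<omega>\<in>space M. (Hh T \<omega>, mv T \<omega>) \<in> W}"
    unfolding W_def using HinV xhH by auto
  hence "measure M {\<omega>\<in>space M. Ntg \<omega> = k \<and> mv T \<omega> (s T n \<omega>) = s T n \<omega>}
        = (\<Sum>z\<in>W. measure M {\<omega>\<in>space M. (Hh T \<omega>, mv T \<omega>) = z})"
    using meas_sum[OF P.finite_measure_axioms finW, of "\<lambda>\<omega>. (Hh T \<omega>, mv T \<omega>)"] cs_set[OF Zmeas] by simp
  also have "\<dots> = (\<Sum>(h, f)\<in>W. measure M {\<omega>\<in>space M. mv T \<omega> = f} * measure M {\<omega>\<in>space M. Hh T \<omega> = h})"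
  proof (rule sum.cong)
    fix z assume "z \<in> W"
    obtain h f where z: "z = (h, f)" by (cases z)
    have "{\<omega>\<in>space M. (Hh T \<omega>, mv T \<omega>) = z} = {\<omega>\<in>space M. mv T \<omega> = f \<and> Hh T \<omega> = h}" unfolding z by auto
    thus "measure M {\<omega>\<in>space M. (Hh T \<omega>, mv T \<omega>) = z} =
      (case z of (h, f) \<Rightarrow> measure M {\<omega>\<in>space M. mv T \<omega> = f} * measure M {\<omega>\<in>space M. Hh T \<omega> = h})"
      using move_indep_past[of T f h] unfolding z Hh_def by simp
  qed simp
  also have "\<dots> = (\<Sum>h\<in>Vk. \<Sum>f\<in>{f. f (xh h) = xh h}. measure M {\<omega>\<in>space M. mv T \<omega> = f} * measure M {\<omega>\<in>space M. Hh T \<omega> = h})"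
    unfolding W_def by (rule sum.Sigma[symmetric]) (use finVk in auto)
  also have "\<dots> = (\<Sum>h\<in>Vk. pi0 * measure M {\<omega>\<in>space M. Hh T \<omega> = h})"
  proof (rule sum.cong)
    fix h assume "h \<in> Vk"
    have "(\<Sum>f\<in>{f. f (xh h) = xh h}. measure M {\<omega>\<in>space M. mv T \<omega> = f}) = measure M {\<omega>\<in>space M. mv T \<omega> \<in> {f. f (xh h) = xh h}}"
      by (rule meas_sum[symmetric]) (auto intro: P.finite_measure_axioms cs_set[OF meas_mv])
    also have "\<dots> = pi0" using move_stay[of T "xh h"] by simp
    finally show "(\<Sum>f\<in>{f. f (xh h) = xh h}. measure M {\<omega>\<in>space M. mv T \<omega> = f} * measure M {\<omega>\<in>space M. Hh T \<omega> = h})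
       = pi0 * measure M {\<omega>\<in>space M. Hh T \<omega> = h}" by (simp add: sum_distrib_right[symmetric])
  qed simp
  also have "\<dots> = pi0 * measure M {\<omega>\<in>space M. Hh T \<omega> \<in> Vk}"
    using meas_sum[OF P.finite_measure_axioms finVk, of "Hh T"] cs_set[OF Hh_meas] by (simp add: sum_distrib_left)
  also have "{\<omega>\<in>space M. Hh T \<omega> \<in> Vk} = {\<omega>\<in>space M. Ntg \<omega> = k}" using HinV by auto
  finally show ?thesis .
qed

end



context model begin

interpretation P: prob_space M by (rule M)

lemma lam_int:
  assumes u: "1 \<le> u" and n: "n < k"
  shows "(\<integral>\<omega>. indicator {\<omega>\<in>space M. Ntg \<omega> = k} \<omega> * lam u (s u n \<omega>) \<omega> \<partial>M)
         = dl k u * measure M {\<omega>\<in>space M. Ntg \<omega> = k}"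
proof -
  have k: "0 < k" using n by simp
  obtain T where uT: "u = Suc T" using u by (cases u) auto
  define A where "A = {\<omega>\<in>space M. Ntg \<omega> = k}"
  define E1 where "E1 = {\<omega>\<in>space M. Ntg \<omega> = k \<and> mv T \<omega> (s T n \<omega>) = s T n \<omega>}"
  define aa where "aa = aaf pi0 g (Lambda / real k) (cb k u)"
  define bb where "bb = bbf pi0 g (Lambda / real k) (cb k u)"
  have As: "A \<in> sets M" unfolding A_def by (rule cs_set[OF meas_N])
  have Zm: "(\<lambda>\<omega>. (Ntg \<omega>, (mv T \<omega>, s T n \<omega>))) \<in> measurable M (count_space UNIV)"
    using cs_pair[OF meas_N cs_pair[OF meas_mv[of T] meas_s[of T n], of Pair], of Pair] by simp
  have Es: "E1 \<in> sets M" unfolding E1_def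
    using cs_set[OF Zm, of "\<lambda>(a, f, x). a = k \<and> f x = x"] by simp
  have lm: "(\<lambda>\<omega>. lam u (s u n \<omega>) \<omega>) \<in> borel_measurable M"
    by (rule measurable_compose_countable[OF _ meas_s]) (rule meas_lam)
  have AEeq: "AE \<omega> in M. indicator A \<omega> * lam u (s u n \<omega>) \<omega> = bb * indicator A \<omega> + (aa - bb) * indicator E1 \<omega>"
  proof (rule AE_mp[OF AE_good], rule AE_I2, intro impI)
    fix \<omega> assume sp: "\<omega> \<in> space M" and good: "\<forall>u j. mv u \<omega> j \<in> nbhd G j"
    show "indicator A \<omega> * lam u (s u n \<omega>) \<omega> = bb * indicator A \<omega> + (aa - bb) * indicator E1 \<omega>"
    proof (cases "Ntg \<omega> = k")
      case False thus ?thesis unfolding A_def E1_def by (simp add: indicator_def)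
    next
      case True
      note ls = lam_struct[OF u True k]
      have Am: "\<omega> \<in> A" unfolding A_def using sp True by simp
      have snm: "s u n \<omega> = mv T \<omega> (s T n \<omega>)" unfolding uT by (rule move)
      have inP: "s T n \<omega> \<in> Psi T \<omega>" unfolding Psi_def using True n by auto
      show ?thesis
      proof (cases "mv T \<omega> (s T n \<omega>) = s T n \<omega>")
        case True2: True
        have "lam u (s u n \<omega>) \<omega> = aa" using ls inP snm True2 unfolding aa_def uT by simp
        moreover have "\<omega> \<in> E1" unfolding E1_def using sp True True2 by simp
        ultimately show ?thesis using Am by simp
      next
        case False
        have "mv T \<omega> (s T n \<omega>) \<in> G (s T n \<omega>)" using good False unfolding nbhd_def by auto
        hence "s u n \<omega> \<in> (\<Union>j\<in>Psi (u-1) \<omega>. G j)" using inP snm unfolding uT by auto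
        hence "lam u (s u n \<omega>) \<omega> = bb" using ls unfolding bb_def by blast
        moreover have "\<omega> \<notin> E1" unfolding E1_def using False by simp
        ultimately show ?thesis using Am by simp
      qed
    qed
  qed
  have fin: "emeasure M A < \<infinity>" "emeasure M E1 < \<infinity>" by (auto simp: less_top[symmetric])
  have "(\<integral>\<omega>. indicator A \<omega> * lam u (s u n \<omega>) \<omega> \<partial>M) = (\<integral>\<omega>. bb * indicator A \<omega> + (aa - bb) * indicator E1 \<omega> \<partial>M)"
    by (rule integral_cong_AE[OF _ _ AEeq]) (use As Es lm in auto)
  also have "\<dots> = bb * measure M A + (aa - bb) * measure M E1"
    using As Es fin by (simp add: Int_absorb2 sets.sets_into_space)
  also have "measure M E1 = pi0 * measure M A" unfolding E1_def A_def by (rule indep[OF n])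
  finally show ?thesis unfolding A_def dl_def aa_def bb_def by (simp add: algebra_simps)
qed

lemma cb_tele: "0 < k \<Longrightarrow> cb k (Suc t) = c1 + (\<Sum>u\<in>{1..<Suc t}. dl k u)"
proof (induction t)
  case 0 thus ?case by simp
next
  case (Suc t)
  thus ?case using cb_step[OF Suc.prems, of "Suc t"] by simp
qed

lemma main:
  assumes t: "1 \<le> t" and pos: "measure M {\<omega>\<in>space M. card (Psi 1 \<omega>) = k} > 0" and n: "n < k"
    and im: "i \<in> measurable M (count_space UNIV)"
    and ii: "\<forall>\<omega>\<in>space M. card (Psi 1 \<omega>) = k \<longrightarrow> i \<omega> \<in> nbhd G (s (t - 1) n \<omega>)"
  shows "cond_exp_event M {\<omega>\<in>space M. card (Psi 1 \<omega>) = k} (\<lambda>\<omega>. c t (i \<omega>) \<omega>) \<le> cb k t"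
proof -
  have k: "0 < k" using n by simp
  obtain t' where tt: "t = Suc t'" using t by (cases t) auto
  define A where "A = {\<omega>\<in>space M. Ntg \<omega> = k}"
  have AA: "{\<omega>\<in>space M. card (Psi 1 \<omega>) = k} = A" unfolding A_def by (rule A_eq)
  have As: "A \<in> sets M" unfolding A_def by (rule cs_set[OF meas_N])
  have ii': "\<And>\<omega>. \<omega> \<in> space M \<Longrightarrow> Ntg \<omega> = k \<Longrightarrow> i \<omega> \<in> nbhd G (s t' n \<omega>)"
    using ii card_Psi tt by simp
  have cm: "(\<lambda>\<omega>. c t (i \<omega>) \<omega>) \<in> borel_measurable M"
    by (rule measurable_compose_countable[OF _ im]) (rule meas_c)
  have lm: "(\<lambda>\<omega>. lam u (s u n \<omega>) \<omega>) \<in> borel_measurable M" for u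
    by (rule measurable_compose_countable[OF _ meas_s]) (rule meas_lam)
  have AEeq: "AE \<omega> in M. indicator A \<omega> * c t (i \<omega>) \<omega> =
      c1 * indicator A \<omega> + (\<Sum>u\<in>{1..<Suc t'}. indicator A \<omega> * lam u (s u n \<omega>) \<omega>)"
  proof (rule AE_mp[OF AE_good], rule AE_I2, intro impI)
    fix \<omega> assume sp: "\<omega> \<in> space M" and good: "\<forall>u j. mv u \<omega> j \<in> nbhd G j"
    show "indicator A \<omega> * c t (i \<omega>) \<omega> =
      c1 * indicator A \<omega> + (\<Sum>u\<in>{1..<Suc t'}. indicator A \<omega> * lam u (s u n \<omega>) \<omega>)"
    proof (cases "Ntg \<omega> = k")
      case False thus ?thesis unfolding A_def by (simp add: indicator_def)
    next
      case True
      have "c t (i \<omega>) \<omega> = c1 + (\<Sum>u\<in>{1..<Suc t'}. lam u (s u n \<omega>) \<omega>)"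
        unfolding tt by (rule c_path[OF True n good ii'[OF sp True]])
      thus ?thesis unfolding A_def using sp True by simp
    qed
  qed
  have intg: "integrable M (\<lambda>\<omega>. indicator A \<omega> * lam u (s u n \<omega>) \<omega>)" if "u \<in> {1..<Suc t'}" for u
  proof (rule P.integrable_const_bound[where B=Lambda])
    show "AE \<omega> in M. norm (indicator A \<omega> * lam u (s u n \<omega>) \<omega>) \<le> Lambda"
      using lam_feas[of u] that Lambda by (intro AE_I2) (auto simp: indicator_def)
    show "(\<lambda>\<omega>. indicator A \<omega> * lam u (s u n \<omega>) \<omega>) \<in> borel_measurable M"
      using As lm by simp
  qed
  have "(\<integral>\<omega>. indicator A \<omega> * c t (i \<omega>) \<omega> \<partial>M) =
      (\<integral>\<omega>. c1 * indicator A \<omega> + (\<Sum>u\<in>{1..<Suc t'}. indicator A \<omega> * lam u (s u n \<omega>) \<omega>) \<partial>M)"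
    by (rule integral_cong_AE[OF _ _ AEeq]) (use As cm lm in auto)
  also have "\<dots> = c1 * measure M A + (\<Sum>u\<in>{1..<Suc t'}. (\<integral>\<omega>. indicator A \<omega> * lam u (s u n \<omega>) \<omega> \<partial>M))"
  proof -
    have finA: "emeasure M A < \<infinity>" by (auto simp: less_top[symmetric])
    have i1: "integrable M (\<lambda>\<omega>. c1 * indicator A \<omega>)" using As finA by simp
    have i2: "integrable M (\<lambda>\<omega>. \<Sum>u\<in>{1..<Suc t'}. indicator A \<omega> * lam u (s u n \<omega>) \<omega>)"
      using Bochner_Integration.integrable_sum[where I="{1..<Suc t'}" and f="\<lambda>u \<omega>. indicator A \<omega> * lam u (s u n \<omega>) \<omega>"] intg by simp
    have e1: "(\<integral>\<omega>. c1 * indicator A \<omega> \<partial>M) = c1 * measure M A"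
      using As finA by (simp add: Int_absorb2 sets.sets_into_space)
    have e2: "(\<integral>\<omega>. (\<Sum>u\<in>{1..<Suc t'}. indicator A \<omega> * lam u (s u n \<omega>) \<omega>) \<partial>M)
        = (\<Sum>u\<in>{1..<Suc t'}. (\<integral>\<omega>. indicator A \<omega> * lam u (s u n \<omega>) \<omega> \<partial>M))"
      using Bochner_Integration.integral_sum[where I="{1..<Suc t'}" and f="\<lambda>u \<omega>. indicator A \<omega> * lam u (s u n \<omega>) \<omega>"] intg by simp
    show ?thesis using Bochner_Integration.integral_add[OF i1 i2] e1 e2 by simp
  qed
  also have "\<dots> = c1 * measure M A + (\<Sum>u\<in>{1..<Suc t'}. dl k u * measure M A)"
    using lam_int[OF _ n] unfolding A_def by simp
  also have "\<dots> = cb k t * measure M A" unfolding tt cb_tele[OF k] sum_distrib_right[symmetric] by (simp add: distrib_right)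
  finally have I: "(\<integral>\<omega>. indicator A \<omega> * c t (i \<omega>) \<omega> \<partial>M) = cb k t * measure M A" .
  have "0 < measure M A" using pos AA by simp
  thus ?thesis unfolding cond_exp_event_def AA I by simp
qed

end


theorem lemma1:
  fixes M :: "'w measure"
    and G :: "'c::finite \<Rightarrow> 'c set" and g :: nat
    and pi0 sigma sigma0 Delta Lambda :: real
    and Ntg :: "'w \<Rightarrow> nat"
    and s :: "nat \<Rightarrow> nat \<Rightarrow> 'w \<Rightarrow> 'c"
    and mv :: "nat \<Rightarrow> 'w \<Rightarrow> 'c \<Rightarrow> 'c"
    and c lam :: "nat \<Rightarrow> 'c \<Rightarrow> 'w \<Rightarrow> real"
    and Psi :: "nat \<Rightarrow> 'w \<Rightarrow> 'c set"
  assumes M: "prob_space M"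
    and G_card: "\<And>j. card (G j) = g" and g_pos: "0 < g" and G_irrefl: "\<And>j. j \<notin> G j"
    and sig: "0 < sigma" "0 < sigma0"
    and Delta0: "Delta\<^sup>2 = 0"
    and Lambda: "0 \<le> Lambda"
    and pi0: "pi0 < 1" "pi0 \<ge> (1 - pi0) / real g"
    and Psi_def: "\<And>t \<omega>. Psi t \<omega> = (\<lambda>n. s t n \<omega>) ` {..<Ntg \<omega>}"
    and disj: "\<And>t \<omega> n n'. n < Ntg \<omega> \<Longrightarrow> n' < Ntg \<omega> \<Longrightarrow> n \<noteq> n' \<Longrightarrow>
                 nbhd G (s t n \<omega>) \<inter> nbhd G (s t n' \<omega>) = {}"
    and move: "\<And>t n \<omega>. s (Suc t) n \<omega> = mv t \<omega> (s t n \<omega>)"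
    and meas_N: "Ntg \<in> measurable M (count_space UNIV)"
    and meas_s: "\<And>t n. s t n \<in> measurable M (count_space UNIV)"
    and meas_mv: "\<And>t. mv t \<in> measurable M (count_space UNIV)"
    and meas_c: "\<And>t i. c t i \<in> borel_measurable M"
    and meas_lam: "\<And>t i. lam t i \<in> borel_measurable M"
    and move_stay: "\<And>t j. measure M {\<omega> \<in> space M. mv t \<omega> j = j} = pi0"
    and move_nb: "\<And>t j k. k \<in> G j \<Longrightarrow> measure M {\<omega> \<in> space M. mv t \<omega> j = k} = (1 - pi0) / real g"
    and move_indep_cells: "\<And>t. prob_space.indep_vars M (\<lambda>_. count_space UNIV) (\<lambda>j \<omega>. mv t \<omega> j) UNIV"
    and move_indep_past: "\<And>t f h. measure M {\<omega> \<in> space M. mv t \<omega> = f \<and>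
              (Ntg \<omega>, map (\<lambda>k. map (\<lambda>n. s k n \<omega>) [0..<Ntg \<omega>]) [0..<Suc t]) = h}
          = measure M {\<omega> \<in> space M. mv t \<omega> = f}
            * measure M {\<omega> \<in> space M.
                (Ntg \<omega>, map (\<lambda>k. map (\<lambda>n. s k n \<omega>) [0..<Ntg \<omega>]) [0..<Suc t]) = h}"
    and c_init: "\<And>i \<omega>. c 1 i \<omega> = sigma\<^sup>2 / sigma0\<^sup>2"
    and c_update: "\<And>t n \<omega> i. 1 \<le> t \<Longrightarrow> n < Ntg \<omega> \<Longrightarrow> i \<in> nbhd G (s t n \<omega>) \<Longrightarrow>
            1 / c (Suc t) i \<omega> = 1 / (c t (s t n \<omega>) \<omega> + lam t (s t n \<omega>) \<omega>) + Delta\<^sup>2 / sigma\<^sup>2"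
    and policy_U: "\<And>t \<omega>. 1 \<le> t \<Longrightarrow>
            is_arg_min
              (alloc_obj (semi_p pi0 g G (Psi (t - 1) \<omega>))
                 (\<lambda>i. if i \<in> nbhd_set G (Psi (t - 1) \<omega>)
                      then cbar (sigma\<^sup>2 / sigma0\<^sup>2) pi0 g Lambda (card (Psi 1 \<omega>)) t
                      else c t i \<omega>))
              (feasible_alloc Lambda) (\<lambda>i. lam t i \<omega>)"
  shows "\<forall>t\<ge>1. \<forall>k. measure M {\<omega> \<in> space M. card (Psi 1 \<omega>) = k} > 0 \<longrightarrow>
           (\<forall>n<k. \<forall>i :: 'w \<Rightarrow> 'c.
              i \<in> measurable M (count_space UNIV) \<and>
              (\<forall>\<omega>\<in>space M. card (Psi 1 \<omega>) = k \<longrightarrow> i \<omega> \<in> nbhd G (s (t - 1) n \<omega>)) \<longrightarrow>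
              cond_exp_event M {\<omega> \<in> space M. card (Psi 1 \<omega>) = k} (\<lambda>\<omega>. c t (i \<omega>) \<omega>)
                \<le> cbar (sigma\<^sup>2 / sigma0\<^sup>2) pi0 g Lambda k t)"
  proof -
  interpret model M G g pi0 sigma sigma0 Delta Lambda Ntg s mv c lam Psi
    by (rule model.intro) (fact assms)+
  show ?thesis using main by blast
qed

end
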